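(* For all $\epsilon\in(0,1/2)$, $\delta\in(0,1)$, all $c,d\in\mathbb{N}^+$ with $c>1$, and all $\gamma>0$, $$G^d_{\mathcal{U}^c\to\mathcal{C}}(\epsilon,\delta,n)\in\Omega(n^{1-\gamma})\quad\text{as } n\to\infty.$$
   Context: Let $\mathcal{B}=\{0,1\}$, let $\mathcal{B}^*$ be the set of finite binary strings and $|h|$ the length of $h\in\mathcal{B}^*$. For $n\in\mathbb{N}^+$, $H^n$ is the set of all functions $\mathcal{B}^n\to\mathcal{B}$ and $\Delta(\mathcal{B}^n)$ the set of probability distributions on $\mathcal{B}^n$. A learning problem is a pair $(f,\mathcal{P})$ with $f\in H^n$, $\mathcal{P}\in\Delta(\mathcal{B}^n)$; an $m$-sample dataset for it is the random sequence $[(x_j,f(x_j))]_{j=1}^m$ with $x_1,\dots,x_m$ i.i.d. $\sim\mathcal{P}$. The accuracy of $\hat f\in H^n$ is $\mathrm{acc}^{\mathcal{P}}_f(\hat f)=\Pr_{x\sim\mathcal{P}}[\hat f(x)=f(x)]$. For $\epsilon\in(0,1/2)$, $\delta\in(0,1)$, an algorithm $\mathcal{A}$ has an $(\epsilon,\delta)$-PAC-learning performance with an $m$-sample dataset on $(f,\mathcal{P})$ if for every $m'\ge m$, with probability at least $1-\delta$ over an $m'$-sample dataset $S$, $\mathrm{acc}^{\mathcal{P}}_f(\mathcal{A}(S))\ge 1-\epsilon$. An interpreter is a Turing machine computing a partial function $\varphi:\mathcal{B}^*\times\mathcal{B}^*\to\mathcal{B}\cup\{\bot\}$, where $\bot$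 denotes non-halting (or invalid) output. For $f\in H^n$, $|f|_\varphi=\min\{|h|:\varphi(h,x)=f(x)\ \forall x\in\mathcal{B}^n\}$ ($+\infty$ if no such $h$). The learning algorithm $\mathit{MDL}^\varphi$, on a dataset $[(x_j,y_j)]_{j=1}^m$ with $x_j\in\mathcal{B}^n$, selects $h^*$ of minimal length among all $h$ with $\varphi(h,x_j)=y_j$ for all $j$ and $\varphi(h,x)\neq\bot$ for all $x\in\mathcal{B}^n$ (ties broken arbitrarily) and outputs $x\mapsto\varphi(h^*,x)$ on $\mathcal{B}^n$. $m^{\epsilon,\delta}_\varphi(f,\mathcal{P})$ is the least $m\in\mathbb{N}^+$ such that $\mathit{MDL}^\varphi$ has an $(\epsilon,\delta)$-PAC-learning performance with an $m$-sample dataset on $(f,\mathcal{P})$ ($+\infty$ if none). For interpreters $\varphi,\psi$ and $n,d\in\mathbb{N}^+$, the sample efficiency gain is $G^d_{\varphi\to\psi}(\epsilon,\delta,n)=\sup\{ m^{\epsilon,\delta}_\psi(f,\mathcal{P})/m^{\epsilon,\delta}_\varphi(f,\mathcal{P}) : f\in H^n,\ \mathcal{P}\in\Delta(\mathcal{B}^n),\ |f|_\varphi\le n^d\}$. Turing machines have alphabet $\{0,1,b\}$ ($b$ blank), a finite state set containing an initial state and two final states accept/reject; the output is $1$ if halting in accept, $0$ if halting in reject, $\bot$ otherwise; multi-tape machines have read-only input tapes and read/write work tapes, and the transition function is a finite list of rules. $E(T)$ is a fixed prefix-free binary encoding of a machine $T$ listing its rules (of length at least 2 for every machine). For $c\in\mathbb{N}^+$,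 $\mathcal{U}^c$ is a time-bounded universal interpreter (a 2-input-tape, 3-work-tape machine): on $(p,x)$ with $n=|x|$, it checks within $n^c$ steps whether $p=E(T)u$ for a two-input-tape machine $T$ and $u\in\mathcal{B}^*$ (outputting $\bot$ if not, or if the check does not finish), then simulates $T$ on $(u,x)$ with an efficient universal simulation (Hennie–Stearns, overhead $O(t\log t)$ for $t$ simulated steps), devoting at most $n^c$ of its own steps to the simulation; it outputs $T$'s output if $T$ halts within this budget and $0$ otherwise. For fixed $p$ it runs in at most $\beta n^c$ steps for a constant $\beta$. In particular, if a Turing machine computes $g:\mathcal{B}^*\to\mathcal{B}$ in time $O(n^{c'})$ with $c'<c$, there is $h\in\mathcal{B}^*$ with $\mathcal{U}^c(h,x)=g(x)$ for all $x$ of sufficiently large length. A Boolean circuit on $n$ inputs is a DAG with a unique sink (output) whose sources are labelled by input indices in $\{1,\dots,n\}$ and whose other vertices (gates) are labelled AND, OR (two incoming edges) or NOT (one incoming edge); its size $|C|$ is its number of vertices. The circuit interpreter $\mathcal{C}$ reads a program $h=0^{\lceil\log_2 n\rceil}1\,[\text{binary expansion of } n]\,0^{|C|}1\,[\text{description of vertex } i]_{i=1}^{|C|}$, each vertex being described by its label and its parents/input index using $\max\{2\lceil\log_2|C|\rceil,\lceil\log_2 n\rceil\}$ bits beyond the label bits, so a circuit $C$ on $n$ inputs has encoding length $L(|C|,n)=2\lceil\log_2 n\rceil+2+|C|(3+\max\{2\lceil\log_2|C|\rceil,\lceil\log_2 n\rceil\})$; $\mathcal{C}(h,x)$ is the circuit's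 output on $x\in\mathcal{B}^n$, and $\bot$ if $h$ is malformed. Hence $|f|_{\mathcal{C}}=\min\{L(|C|,n): C \text{ computes } f\}$. *)

theory Defs
  imports "HOL-Probability.Probability"
begin

text \<open>Binary strings are bool lists. An interpreter is a partial function
  B* x B* -> B + {bot}; None encodes bot.\<close>

type_synonym interp = "bool list \<Rightarrow> bool list \<Rightarrow> bool option"
type_synonym dataset = "(bool list \<times> bool) list"

definition consistent :: "interp \<Rightarrow> nat \<Rightarrow> dataset \<Rightarrow> bool list \<Rightarrow> bool" where
  "consistent \<phi> n D h \<longleftrightarrow>
     (\<forall>(x,y)\<in>set D. \<phi> h x = Some y) \<and> (\<forall>x. length x = n \<longrightarrow> \<phi> h x \<noteq> None)"

definition mdl_cands :: "interp \<Rightarrow> nat \<Rightarrow> dataset \<Rightarrow> bool list set" where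
  "mdl_cands \<phi> n D =
     {h. consistent \<phi> n D h \<and> (\<forall>h'. consistent \<phi> n D h' \<longrightarrow> length h \<le> length h')}"

type_synonym tiebreak = "dataset \<Rightarrow> bool list set \<Rightarrow> bool list"

definition valid_tb :: "tiebreak \<Rightarrow> bool" where
  "valid_tb tb \<longleftrightarrow> (\<forall>D S. S \<noteq> {} \<longrightarrow> tb D S \<in> S)"

definition MDL :: "interp \<Rightarrow> tiebreak \<Rightarrow> nat \<Rightarrow> dataset \<Rightarrow> (bool list \<Rightarrow> bool) option" where
  "MDL \<phi> tb n D =
     (if mdl_cands \<phi> n D = {} then None
      else Some (\<lambda>x. the (\<phi> (tb D (mdl_cands \<phi> n D)) x)))"

definition acc :: "bool list pmf \<Rightarrow> (bool list \<Rightarrow> bool) \<Rightarrow> (bool list \<Rightarrow> bool) \<Rightarrow> real" where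
  "acc P f g = measure_pmf.prob P {x. g x = f x}"

definition mk_dataset :: "(bool list \<Rightarrow> bool) \<Rightarrow> nat \<Rightarrow> (nat \<Rightarrow> bool list) \<Rightarrow> dataset" where
  "mk_dataset f m xs = map (\<lambda>j. (xs j, f (xs j))) [0..<m]"

text \<open>m i.i.d. samples from P, as a random function on {..<m}.\<close>
definition samples :: "bool list pmf \<Rightarrow> nat \<Rightarrow> (nat \<Rightarrow> bool list) pmf" where
  "samples P m = Pi_pmf {..<m} [] (\<lambda>_. P)"

definition mdl_success ::
  "interp \<Rightarrow> tiebreak \<Rightarrow> nat \<Rightarrow> (bool list \<Rightarrow> bool) \<Rightarrow> bool list pmf \<Rightarrow> real \<Rightarrow> dataset \<Rightarrow> bool" where
  "mdl_success \<phi> tb n f P \<epsilon> D =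
     (case MDL \<phi> tb n D of None \<Rightarrow> False | Some g \<Rightarrow> acc P f g \<ge> 1 - \<epsilon>)"

definition mdl_pac ::
  "interp \<Rightarrow> tiebreak \<Rightarrow> nat \<Rightarrow> (bool list \<Rightarrow> bool) \<Rightarrow> bool list pmf \<Rightarrow> real \<Rightarrow> real \<Rightarrow> nat \<Rightarrow> bool" where
  "mdl_pac \<phi> tb n f P \<epsilon> \<delta> m \<longleftrightarrow>
     (\<forall>m'\<ge>m. measure_pmf.prob (samples P m')
                {xs. mdl_success \<phi> tb n f P \<epsilon> (mk_dataset f m' xs)} \<ge> 1 - \<delta>)"

definition sample_cx ::
  "interp \<Rightarrow> tiebreak \<Rightarrow> nat \<Rightarrow> (bool list \<Rightarrow> bool) \<Rightarrow> bool list pmf \<Rightarrow> real \<Rightarrow> real \<Rightarrow> enat" where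
  "sample_cx \<phi> tb n f P \<epsilon> \<delta> =
     (if \<exists>m\<ge>1. mdl_pac \<phi> tb n f P \<epsilon> \<delta> m
      then enat (LEAST m. m \<ge> 1 \<and> mdl_pac \<phi> tb n f P \<epsilon> \<delta> m) else \<infinity>)"

text \<open>|f|_phi for f in H^n (infinity if no program).\<close>
definition desc_len :: "interp \<Rightarrow> nat \<Rightarrow> (bool list \<Rightarrow> bool) \<Rightarrow> enat" where
  "desc_len \<phi> n f = (INF h \<in> {h. \<forall>x. length x = n \<longrightarrow> \<phi> h x = Some (f x)}. enat (length h))"

definition gain ::
  "interp \<Rightarrow> tiebreak \<Rightarrow> interp \<Rightarrow> tiebreak \<Rightarrow> real \<Rightarrow> real \<Rightarrow> nat \<Rightarrow> nat \<Rightarrow> ereal" where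
  "gain \<phi> tb\<phi> \<psi> tb\<psi> \<epsilon> \<delta> n d =
     (SUP fP \<in> {(f, P). set_pmf P \<subseteq> {x. length x = n} \<and> desc_len \<phi> n f \<le> enat (n ^ d)}.
        ereal_of_enat (sample_cx \<psi> tb\<psi> n (fst fP) (snd fP) \<epsilon> \<delta>)
        / ereal_of_enat (sample_cx \<phi> tb\<phi> n (fst fP) (snd fP) \<epsilon> \<delta>))"

section \<open>Turing machines with two read-only input tapes and W work tapes\<close>

datatype sym = S0 | S1 | Blank

text \<open>A rule (q, read, q', write, move): in state q reading the symbols 'read'
  under the 2+W heads, go to q', write 'write' on the W work tapes and move the
  2+W heads by 'move' (each in {-1,0,1}). States are naturals: 0 initial,
  1 accept, 2 reject.\<close>
type_synonym rule = "nat \<times> sym list \<times> nat \<times> sym list \<times> int list"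

datatype tm = TM (nwork: nat) (rules: "rule list")

definition wf_tm :: "tm \<Rightarrow> bool" where
  "wf_tm M \<longleftrightarrow>
     (\<forall>(q, rd, q', wr, mv) \<in> set (rules M).
        length rd = 2 + nwork M \<and> length wr = nwork M \<and> length mv = 2 + nwork M \<and>
        set mv \<subseteq> {-1, 0, 1}) \<and>
     distinct (map (\<lambda>(q, rd, _). (q, rd)) (rules M))"

type_synonym config = "nat \<times> int list \<times> (int \<Rightarrow> sym) list"

definition tape_of :: "bool list \<Rightarrow> int \<Rightarrow> sym" where
  "tape_of xs i = (if 0 \<le> i \<and> i < int (length xs) then (if xs ! nat i then S1 else S0) else Blank)"

definition init_cfg :: "tm \<Rightarrow> config" where
  "init_cfg M = (0, replicate (2 + nwork M) 0, replicate (nwork M) (\<lambda>_. Blank))"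

definition read_syms :: "tm \<Rightarrow> bool list \<Rightarrow> bool list \<Rightarrow> config \<Rightarrow> sym list" where
  "read_syms M u x c = (case c of (q, pos, tps) \<Rightarrow>
     [tape_of u (pos ! 0), tape_of x (pos ! 1)] @
     map (\<lambda>j. (tps ! j) (pos ! (2 + j))) [0..<nwork M])"

text \<open>One step; None means the machine has halted (final state or no applicable rule).\<close>
definition step :: "tm \<Rightarrow> bool list \<Rightarrow> bool list \<Rightarrow> config \<Rightarrow> config option" where
  "step M u x c = (case c of (q, pos, tps) \<Rightarrow>
     if q = 1 \<or> q = 2 then None else
     (case find (\<lambda>(q0, rd, _). q0 = q \<and> rd = read_syms M u x c) (rules M) of
        None \<Rightarrow> None
      | Some (_, _, q', wr, mv) \<Rightarrow>
          Some (q', map2 (+) pos mv,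
                map (\<lambda>j. (tps ! j)(pos ! (2 + j) := wr ! j)) [0..<nwork M])))"

definition cfg_at :: "tm \<Rightarrow> bool list \<Rightarrow> bool list \<Rightarrow> nat \<Rightarrow> config" where
  "cfg_at M u x t = ((\<lambda>c. case step M u x c of None \<Rightarrow> c | Some c' \<Rightarrow> c') ^^ t) (init_cfg M)"

definition halts_at :: "tm \<Rightarrow> bool list \<Rightarrow> bool list \<Rightarrow> nat \<Rightarrow> bool" where
  "halts_at M u x t \<longleftrightarrow> step M u x (cfg_at M u x t) = None \<and>
     (\<forall>t' < t. step M u x (cfg_at M u x t') \<noteq> None)"

definition out_of :: "config \<Rightarrow> bool option" where
  "out_of c = (if fst c = 1 then Some True else if fst c = 2 then Some False else None)"

definition tm_out :: "tm \<Rightarrow> bool list \<Rightarrow> bool list \<Rightarrow> nat \<Rightarrow> bool option" where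
  "tm_out M u x t = out_of (cfg_at M u x t)"

section \<open>The time-bounded universal interpreter U^c\<close>

text \<open>A fixed prefix-free encoding E of machines (length at least 2 for every machine).\<close>
definition tm_encoding :: "(tm \<Rightarrow> bool list) \<Rightarrow> bool" where
  "tm_encoding E \<longleftrightarrow>
     (\<forall>M. wf_tm M \<longrightarrow> length (E M) \<ge> 2) \<and>
     (\<forall>M M' z. wf_tm M \<and> wf_tm M' \<and> E M' = E M @ z \<longrightarrow> M = M')"

text \<open>phi is (an implementation of) U^c w.r.t. the encoding E:
  (1) bot on programs not of the form E(T)u;
  (2) for p = E(T)u: the syntactic check finishes iff n is at least a threshold
      depending on p (bot before); afterwards the output is either 0 (budget of
      n^c own steps exhausted) or T's output after halting within n^c steps, and it
      is T's output whenever T halts within t steps with a_T (t+1) log(t+2) <= n^c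
      (Hennie-Stearns simulation overhead, constant depending on T only);
  (3) phi is computed by a 2-input-tape, 3-work-tape machine halting within
      beta n^c steps.\<close>
definition is_Uc :: "nat \<Rightarrow> (tm \<Rightarrow> bool list) \<Rightarrow> interp \<Rightarrow> bool" where
  "is_Uc c E \<phi> \<longleftrightarrow>
     (\<forall>p x. \<not> (\<exists>M u. wf_tm M \<and> p = E M @ u) \<longrightarrow> \<phi> p x = None) \<and>
     (\<forall>M. wf_tm M \<longrightarrow> (\<exists>a::real > 0. \<forall>u. \<exists>N. \<forall>x.
        (length x < N \<longrightarrow> \<phi> (E M @ u) x = None) \<and>
        (length x \<ge> N \<longrightarrow>
           (\<phi> (E M @ u) x = Some False \<or>
            (\<exists>t \<le> length x ^ c. halts_at M u x t \<and> \<phi> (E M @ u) x = tm_out M u x t)) \<and>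
           (\<forall>t. halts_at M u x t \<and> a * (real t + 1) * log 2 (real t + 2) \<le> real (length x ^ c)
                \<longrightarrow> \<phi> (E M @ u) x = tm_out M u x t)))) \<and>
     (\<exists>MU \<beta>. wf_tm MU \<and> nwork MU = 3 \<and>
        (\<forall>p x. length x \<ge> 1 \<longrightarrow>
           (\<exists>t. real t \<le> \<beta> * real (length x) ^ c \<and> halts_at MU p x t \<and> tm_out MU p x t = \<phi> p x)))"

section \<open>The circuit interpreter C\<close>

datatype vtx = VIn nat | VAnd nat nat | VOr nat nat | VNot nat

definition clog2 :: "nat \<Rightarrow> nat" where
  "clog2 n = (LEAST k. n \<le> 2 ^ k)"   \<comment> \<open>= ceiling(log2 n) for n >= 1\<close>

definition bits_to_nat :: "bool list \<Rightarrow> nat" where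
  "bits_to_nat bs = foldl (\<lambda>a b. 2 * a + (if b then 1 else 0)) 0 bs"

text \<open>Decoding of one vertex description: 2 label bits (00 input, 01 AND, 10 OR,
  11 NOT) followed by a w-bit field. Input index i in {1..n} is stored as i-1 in
  clog2 n bits; parents j in {1..s} are stored as j-1 in clog2 s bits each.
  Remaining field bits are ignored.\<close>
definition decode_vtx :: "nat \<Rightarrow> nat \<Rightarrow> bool list \<Rightarrow> vtx option" where
  "decode_vtx n s ch =
     (let fld = drop 2 ch; k = clog2 s;
          a = bits_to_nat (take k fld); b = bits_to_nat (take k (drop k fld));
          i = bits_to_nat (take (clog2 n) fld) in
      if \<not> ch ! 0 \<and> \<not> ch ! 1 then (if i < n then Some (VIn i) else None)
      else if \<not> ch ! 0 \<and> ch ! 1 then (if a < s \<and> b < s then Some (VAnd a b) else None)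
      else if ch ! 0 \<and> \<not> ch ! 1 then (if a < s \<and> b < s then Some (VOr a b) else None)
      else (if a < s then Some (VNot a) else None))"

fun parents :: "vtx \<Rightarrow> nat set" where
  "parents (VIn _) = {}"
| "parents (VAnd a b) = {a, b}"
| "parents (VOr a b) = {a, b}"
| "parents (VNot a) = {a}"

definition edges :: "vtx list \<Rightarrow> (nat \<times> nat) set" where
  "edges vs = {(a, v). v < length vs \<and> a \<in> parents (vs ! v)}"

definition sinks :: "vtx list \<Rightarrow> nat set" where
  "sinks vs = {v. v < length vs \<and> \<not> (\<exists>u < length vs. v \<in> parents (vs ! u))}"

definition wf_circ :: "vtx list \<Rightarrow> bool" where
  "wf_circ vs \<longleftrightarrow> vs \<noteq> [] \<and> acyclic (edges vs) \<and> card (sinks vs) = 1"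

fun ev :: "bool list \<Rightarrow> vtx list \<Rightarrow> nat \<Rightarrow> nat \<Rightarrow> bool" where
  "ev x vs 0 v = False"
| "ev x vs (Suc k) v = (case vs ! v of
      VIn i \<Rightarrow> x ! i
    | VAnd a b \<Rightarrow> ev x vs k a \<and> ev x vs k b
    | VOr a b \<Rightarrow> ev x vs k a \<or> ev x vs k b
    | VNot a \<Rightarrow> \<not> ev x vs k a)"

definition circ_eval :: "vtx list \<Rightarrow> bool list \<Rightarrow> bool" where
  "circ_eval vs x = ev x vs (length vs) (the_elem (sinks vs))"

text \<open>Program h = 0^k 1 [n-1 in k = clog2 n bits] 0^s 1 [vertex 1] ... [vertex s],
  each vertex using 2 + max(2 clog2 s, clog2 n) bits; total length L(s,n).\<close>
definition decode_circ :: "bool list \<Rightarrow> (nat \<times> vtx list) option" where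
  "decode_circ h =
     (let k = length (takeWhile Not h); r1 = drop (Suc k) h;
          n = bits_to_nat (take k r1) + 1; r2 = drop k r1;
          s = length (takeWhile Not r2); r3 = drop (Suc s) r2;
          w = max (2 * clog2 s) (clog2 n);
          chs = map (\<lambda>i. take (2 + w) (drop (i * (2 + w)) r3)) [0..<s];
          dvs = map (decode_vtx n s) chs in
      if length h > k \<and> length r1 \<ge> k \<and> clog2 n = k \<and> length r2 > s \<and>
         length r3 = s * (2 + w) \<and> None \<notin> set dvs \<and> wf_circ (map the dvs)
      then Some (n, map the dvs) else None)"

definition circuit_interp :: interp where
  "circuit_interp h x = (case decode_circ h of
      None \<Rightarrow> None
    | Some (n, vs) \<Rightarrow> if length x = n then Some (circ_eval vs x) else None)"

end

theory Submission
  imports Defs "HOL-Real_Asymp.Real_Asymp"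
begin



fun nat_to_bits :: "nat \<Rightarrow> nat \<Rightarrow> bool list" where
  "nat_to_bits 0 v = []"
| "nat_to_bits (Suc k) v = nat_to_bits k (v div 2) @ [odd v]"

lemma length_nat_to_bits[simp]: "length (nat_to_bits k v) = k"
  by (induction k arbitrary: v) auto

lemma bits_to_nat_snoc: "bits_to_nat (bs @ [b]) = 2 * bits_to_nat bs + (if b then 1 else 0)"
  by (simp add: bits_to_nat_def)

lemma bits_to_nat_nat_to_bits: "bits_to_nat (nat_to_bits k v) = v mod 2 ^ k"
proof (induction k arbitrary: v)
  case 0 then show ?case by (simp add: bits_to_nat_def)
next
  case (Suc k)
  have "bits_to_nat (nat_to_bits (Suc k) v) = 2 * (v div 2 mod 2 ^ k) + (if odd v then 1 else 0)"
    using Suc by (simp only: nat_to_bits.simps bits_to_nat_snoc)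
  also have "(if odd v then 1 else 0) = v mod (2::nat)"
    by (simp add: odd_iff_mod_2_eq_one)
  also have "2 * (v div 2 mod 2 ^ k) + v mod 2 = v mod 2 ^ Suc k"
    by (simp only: power_Suc mod_mult2_eq)
  finally show ?case .
qed

lemma clog2_ge: "n \<le> 2 ^ clog2 n"
proof -
  have "n \<le> 2 ^ n" using less_exp[of n] by linarith
  then show ?thesis unfolding clog2_def by (rule LeastI)
qed

lemma clog2_mono: assumes "n \<le> m" shows "clog2 n \<le> clog2 m"
proof -
  have "n \<le> 2 ^ clog2 m" using assms clog2_ge[of m] by linarith
  then show ?thesis unfolding clog2_def[of n] by (rule Least_le)
qed

lemma bits_roundtrip: "v < n \<Longrightarrow> bits_to_nat (nat_to_bits (clog2 n) v) = v"
  using clog2_ge[of n] by (simp add: bits_to_nat_nat_to_bits)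

definition pad :: "nat \<Rightarrow> bool list \<Rightarrow> bool list" where
  "pad w bs = bs @ replicate (w - length bs) False"

definition enc_vtx :: "nat \<Rightarrow> nat \<Rightarrow> nat \<Rightarrow> vtx \<Rightarrow> bool list" where
  "enc_vtx n s w vx = (case vx of
      VIn i \<Rightarrow> [False, False] @ pad w (nat_to_bits (clog2 n) i)
    | VAnd a b \<Rightarrow> [False, True] @ pad w (nat_to_bits (clog2 s) a @ nat_to_bits (clog2 s) b)
    | VOr a b \<Rightarrow> [True, False] @ pad w (nat_to_bits (clog2 s) a @ nat_to_bits (clog2 s) b)
    | VNot a \<Rightarrow> [True, True] @ pad w (nat_to_bits (clog2 s) a))"

lemma length_enc_vtx: "w = max (2 * clog2 s) (clog2 n) \<Longrightarrow> length (enc_vtx n s w vx) = 2 + w"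
  by (cases vx) (auto simp: enc_vtx_def pad_def)

lemma decode_enc_vtx:
  assumes "\<forall>i. vx = VIn i \<longrightarrow> i < n" "\<forall>a\<in>parents vx. a < s" "w = max (2 * clog2 s) (clog2 n)"
  shows "decode_vtx n s (enc_vtx n s w vx) = Some vx"
proof (cases vx)
  case (VIn i)
  have "take (clog2 n) (pad w (nat_to_bits (clog2 n) i)) = nat_to_bits (clog2 n) i"
    by (simp add: pad_def)
  then show ?thesis using VIn assms bits_roundtrip[of i n]
    by (simp add: enc_vtx_def decode_vtx_def Let_def)
next
  case (VAnd a b)
  have t1: "take (clog2 s) (pad w (nat_to_bits (clog2 s) a @ nat_to_bits (clog2 s) b)) = nat_to_bits (clog2 s) a"
    by (simp add: pad_def)
  have t2: "take (clog2 s) (drop (clog2 s) (pad w (nat_to_bits (clog2 s) a @ nat_to_bits (clog2 s) b))) = nat_to_bits (clog2 s) b"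
    by (simp add: pad_def)
  show ?thesis using VAnd assms bits_roundtrip[of a s] bits_roundtrip[of b s] t1 t2
    by (simp add: enc_vtx_def decode_vtx_def Let_def)
next
  case (VOr a b)
  have t1: "take (clog2 s) (pad w (nat_to_bits (clog2 s) a @ nat_to_bits (clog2 s) b)) = nat_to_bits (clog2 s) a"
    by (simp add: pad_def)
  have t2: "take (clog2 s) (drop (clog2 s) (pad w (nat_to_bits (clog2 s) a @ nat_to_bits (clog2 s) b))) = nat_to_bits (clog2 s) b"
    by (simp add: pad_def)
  show ?thesis using VOr assms bits_roundtrip[of a s] bits_roundtrip[of b s] t1 t2
    by (simp add: enc_vtx_def decode_vtx_def Let_def)
next
  case (VNot a)
  have t1: "take (clog2 s) (pad w (nat_to_bits (clog2 s) a)) = nat_to_bits (clog2 s) a"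
    by (simp add: pad_def)
  show ?thesis using VNot assms bits_roundtrip[of a s] t1
    by (simp add: enc_vtx_def decode_vtx_def Let_def)
qed

lemma take_drop_concat:
  assumes "\<forall>c\<in>set cs. length c = L" "i < length cs"
  shows "take L (drop (i * L) (concat cs)) = cs ! i"
  using assms
proof (induction cs arbitrary: i)
  case Nil then show ?case by simp
next
  case (Cons c cs)
  show ?case
  proof (cases i)
    case 0 then show ?thesis using Cons by simp
  next
    case (Suc j)
    then have "drop (i * L) (concat (c # cs)) = drop (j * L) (concat cs)"
      using Cons.prems by simp
    then show ?thesis using Cons Suc by simp
  qed
qed

definition enc_circ :: "nat \<Rightarrow> vtx list \<Rightarrow> bool list" where
  "enc_circ n vs = replicate (clog2 n) False @ [True] @ nat_to_bits (clog2 n) (n - 1) @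
     replicate (length vs) False @ [True] @
     concat (map (enc_vtx n (length vs) (max (2 * clog2 (length vs)) (clog2 n))) vs)"

lemma takeWhile_rep: "takeWhile Not (replicate k False @ True # r) = replicate k False"
  by (induction k) auto

lemma decode_enc_circ:
  assumes "n \<ge> 1" "wf_circ vs"
    "\<forall>v<length vs. \<forall>a\<in>parents (vs!v). a < length vs"
    "\<forall>v<length vs. \<forall>i. vs!v = VIn i \<longrightarrow> i < n"
  shows "decode_circ (enc_circ n vs) = Some (n, vs)"
proof -
  define k where "k = clog2 n"
  define s where "s = length vs"
  define w where "w = max (2 * clog2 s) (clog2 n)"
  define r3 where "r3 = concat (map (enc_vtx n s w) vs)"
  have h: "enc_circ n vs = replicate k False @ True # (nat_to_bits k (n - 1) @ replicate s False @ True # r3)"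
    by (simp add: enc_circ_def k_def s_def w_def r3_def)
  have nn: "bits_to_nat (nat_to_bits k (n - 1)) + 1 = n"
    using bits_roundtrip[of "n - 1" n] assms(1) by (simp add: k_def)
  have lc: "\<forall>c\<in>set (map (enc_vtx n s w) vs). length c = 2 + w"
    using length_enc_vtx w_def by auto
  have ml: "map (length \<circ> enc_vtx n s w) vs = map (\<lambda>_. 2 + w) vs"
    by (rule map_cong[OF refl]) (simp only: comp_def length_enc_vtx[OF w_def])
  have l3': "length r3 = sum_list (map (\<lambda>_. 2 + w) vs)"
    by (simp only: r3_def length_concat map_map ml)
  have l3: "length r3 = s * (2 + w)"
    unfolding l3' sum_list_triv s_def by (simp only: of_nat_id)
  have chs: "map (\<lambda>i. take (2 + w) (drop (i * (2 + w)) r3)) [0..<s] = map (enc_vtx n s w) vs"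
  proof (rule nth_equalityI)
    fix i assume "i < length (map (\<lambda>i. take (2 + w) (drop (i * (2 + w)) r3)) [0..<s])"
    then have i: "i < s" by simp
    then show "map (\<lambda>i. take (2 + w) (drop (i * (2 + w)) r3)) [0..<s] ! i = map (enc_vtx n s w) vs ! i"
      using take_drop_concat[OF lc, of i] by (simp add: r3_def s_def)
  qed (simp add: s_def)
  have dv: "map (decode_vtx n s) (map (enc_vtx n s w) vs) = map Some vs"
  proof (rule nth_equalityI)
    fix i assume "i < length (map (decode_vtx n s) (map (enc_vtx n s w) vs))"
    then have i: "i < length vs" by simp
    have "vs ! i \<in> set vs" using i by simp
    then show "map (decode_vtx n s) (map (enc_vtx n s w) vs) ! i = map Some vs ! i"
      using decode_enc_vtx[of "vs ! i" n s w] assms(3,4) i w_def s_def by auto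
  qed simp
  have mt: "map the (map Some vs) = vs" by (induction vs) auto
  define R2 where "R2 = replicate s False @ True # r3"
  define R1 where "R1 = nat_to_bits k (n - 1) @ R2"
  have h': "enc_circ n vs = replicate k False @ True # R1" using h by (simp add: R1_def R2_def)
  have e1: "length (takeWhile Not (enc_circ n vs)) = k" unfolding h' takeWhile_rep by simp
  have e2: "drop (Suc k) (enc_circ n vs) = R1" unfolding h' by simp
  have e3: "take k R1 = nat_to_bits k (n - 1)" unfolding R1_def by simp
  have e4: "drop k R1 = R2" unfolding R1_def by simp
  have e5: "length (takeWhile Not R2) = s" unfolding R2_def takeWhile_rep by simp
  have e6: "drop (Suc s) R2 = r3" unfolding R2_def by simp
  have c1: "length (enc_circ n vs) > k" unfolding h' by simp
  have c2: "length R1 \<ge> k" unfolding R1_def by simp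
  have c3: "length R2 > s" unfolding R2_def by simp
  have c4: "None \<notin> set (map Some vs)" by auto
  have w': "max (2 * clog2 s) k = w" by (simp add: w_def k_def)
  show ?thesis
    unfolding decode_circ_def Let_def e1 e2 e3 nn e4 e5 e6 k_def[symmetric] w' chs dv mt
    using c1 c2 c3 c4 l3 assms(2) by (simp only: if_True simp_thms refl)
qed



lemma decode_vtx_props: "decode_vtx n s ch = Some vx \<Longrightarrow> (\<forall>i. vx = VIn i \<longrightarrow> i < n) \<and> (\<forall>a\<in>parents vx. a < s)"
  unfolding decode_vtx_def Let_def by (auto split: if_splits)

lemma decode_circ_props:
  assumes "decode_circ h = Some (n, vs)"
  shows "length h = 2 * clog2 n + 2 + length vs * (3 + max (2 * clog2 (length vs)) (clog2 n))"
    and "\<forall>v<length vs. \<forall>a\<in>parents (vs!v). a < length vs"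
    and "\<forall>v<length vs. \<forall>i. vs!v = VIn i \<longrightarrow> i < n"
    and "wf_circ vs"
proof -
  define k where "k = length (takeWhile Not h)"
  define r1 where "r1 = drop (Suc k) h"
  define n' where "n' = bits_to_nat (take k r1) + 1"
  define r2 where "r2 = drop k r1"
  define s where "s = length (takeWhile Not r2)"
  define r3 where "r3 = drop (Suc s) r2"
  define w where "w = max (2 * clog2 s) (clog2 n')"
  define chs where "chs = map (\<lambda>i. take (2 + w) (drop (i * (2 + w)) r3)) [0..<s]"
  define dvs where "dvs = map (decode_vtx n' s) chs"
  have C: "length h > k \<and> length r1 \<ge> k \<and> clog2 n' = k \<and> length r2 > s \<and>
         length r3 = s * (2 + w) \<and> None \<notin> set dvs \<and> wf_circ (map the dvs)"
   and E: "n = n'" "vs = map the dvs"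
    using assms unfolding decode_circ_def Let_def
    by (simp_all only: k_def[symmetric] r1_def[symmetric] n'_def[symmetric] r2_def[symmetric]
      s_def[symmetric] r3_def[symmetric] w_def[symmetric] chs_def[symmetric] dvs_def[symmetric]
      split: if_splits) auto
  have ls: "length vs = s" using E by (simp add: dvs_def chs_def)
  show "wf_circ vs" using C E by simp
  show "length h = 2 * clog2 n + 2 + length vs * (3 + max (2 * clog2 (length vs)) (clog2 n))"
  proof -
    have ck: "clog2 n = k" using C E by simp
    have l3: "length r3 = length h - Suc k - k - Suc s" by (simp add: r1_def r2_def r3_def)
    have "length h = 2 * k + 2 + s + length r3" using C l3 by (simp add: r1_def r2_def) (elim conjE; linarith)
    then show ?thesis using C ls ck by (simp add: w_def algebra_simps)
  qed
  have D: "\<And>v. v < length vs \<Longrightarrow> decode_vtx n s (chs ! v) = Some (vs ! v)"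
  proof -
    fix v assume "v < length vs"
    then have "dvs ! v \<in> set dvs" "v < length dvs" using E by auto
    then have "dvs ! v \<noteq> None" using C by metis
    moreover have "dvs ! v = decode_vtx n s (chs ! v)" "vs ! v = the (dvs ! v)"
      using \<open>v < length dvs\<close> E by (auto simp: dvs_def)
    ultimately show "decode_vtx n s (chs ! v) = Some (vs ! v)" by auto
  qed
  show "\<forall>v<length vs. \<forall>a\<in>parents (vs!v). a < length vs"
    using D decode_vtx_props ls by blast
  show "\<forall>v<length vs. \<forall>i. vs!v = VIn i \<longrightarrow> i < n"
    using D decode_vtx_props by blast
qed

lemma ev_cong:
  assumes "\<forall>v<length vs. \<forall>a\<in>parents (vs!v). a < length vs"
    and "\<forall>v<length vs. \<forall>i. vs!v = VIn i \<longrightarrow> x!i = y!i" and "v < length vs"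
  shows "ev x vs k v = ev y vs k v"
  using assms(3)
proof (induction k arbitrary: v)
  case 0 then show ?case by simp
next
  case (Suc k)
  show ?case
  proof (cases "vs ! v")
    case (VIn i) then show ?thesis using assms(2) Suc by simp
  next
    case (VAnd a b) then show ?thesis using assms(1) Suc by fastforce
  next
    case (VOr a b) then show ?thesis using assms(1) Suc by fastforce
  next
    case (VNot a) then show ?thesis using assms(1) Suc by fastforce
  qed
qed

lemma sink_range: "wf_circ vs \<Longrightarrow> the_elem (sinks vs) < length vs"
proof -
  assume "wf_circ vs"
  then have "card (sinks vs) = 1" by (simp add: wf_circ_def)
  then obtain z where "sinks vs = {z}" by (auto simp: card_Suc_eq)
  then show ?thesis by (auto simp: sinks_def)
qed



definition orv :: "nat list \<Rightarrow> nat \<Rightarrow> vtx" where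
  "orv is v = (if v = 0 then VIn 0 else if v = 1 then VNot 0 else if v = 2 then VAnd 0 1
     else if odd v then VIn (is ! ((v - 3) div 2)) else VOr (v - 2) (v - 1))"

definition orc :: "nat list \<Rightarrow> vtx list" where
  "orc is = map (orv is) [0..<3 + 2 * length is]"

lemma length_orc[simp]: "length (orc is) = 3 + 2 * length is"
  by (simp add: orc_def)

lemma orc_nth: "v < 3 + 2 * length is \<Longrightarrow> orc is ! v = orv is v"
  by (simp add: orc_def del: upt_Suc)

lemma orv_par: "a \<in> parents (orv is v) \<Longrightarrow> a < v"
  by (auto simp: orv_def split: if_splits)

lemma orv_in: "orv is v = VIn i \<Longrightarrow> v < 3 + 2 * length is \<Longrightarrow> i = 0 \<or> i \<in> set is"
proof -
  assume a: "orv is v = VIn i" "v < 3 + 2 * length is"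
  show ?thesis
  proof (cases "v = 0")
    case True then show ?thesis using a by (simp add: orv_def)
  next
    case False
    then have "v \<ge> 3" "odd v" "i = is ! ((v - 3) div 2)" using a(1)
      by (auto simp: orv_def split: if_splits)
    moreover have "(v - 3) div 2 < length is" using a(2) \<open>v \<ge> 3\<close> by linarith
    ultimately show ?thesis by simp
  qed
qed

lemma orc_par: "v < length (orc is) \<Longrightarrow> a \<in> parents (orc is ! v) \<Longrightarrow> a < v"
  using orc_nth orv_par by fastforce

lemma sinks_orc: "sinks (orc is) = {2 + 2 * length is}"
proof (rule set_eqI, rule iffI)
  fix v assume v: "v \<in> sinks (orc is)"
  then have vl: "v < 3 + 2 * length is" and np: "\<And>u. u < 3 + 2 * length is \<Longrightarrow> v \<notin> parents (orc is ! u)"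
    by (auto simp: sinks_def)
  show "v \<in> {2 + 2 * length is}"
  proof (rule ccontr)
    assume "v \<notin> {2 + 2 * length is}"
    then have vl2: "v < 2 + 2 * length is" using vl by simp
    have "v = 0 \<or> v = 1 \<or> (v \<ge> 2 \<and> even v) \<or> (v \<ge> 3 \<and> odd v)" by presburger
    then consider "v = 0" | "v = 1" | "v \<ge> 2" "even v" | "v \<ge> 3" "odd v" by blast
    then show False
    proof cases
      case 1 then show False using np[of 1] by (simp add: orc_nth orv_def)
    next
      case 2 then show False using np[of 2] by (simp add: orc_nth orv_def)
    next
      case 3
      then have "v < Suc (2 * length is)" using vl2 by presburger
      then show False using 3 np[of "v + 2"] vl2 by (simp add: orc_nth orv_def)
    next
      case 4 then show False using np[of "v + 1"] vl2 by (simp add: orc_nth orv_def)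
    qed
  qed
next
  fix v assume "v \<in> {2 + 2 * length is}"
  then show "v \<in> sinks (orc is)"
    using orc_par[of _ "is" v] by (fastforce simp: sinks_def)
qed

lemma wf_orc: "wf_circ (orc is)"
proof -
  have "edges (orc is) \<subseteq> less_than"
    using orc_par by (auto simp: edges_def)
  then have "acyclic (edges (orc is))"
    using acyclic_subset wf_acyclic wf_less_than by blast
  moreover have "orc is \<noteq> []" by (simp add: orc_def)
  ultimately show ?thesis by (simp add: wf_circ_def sinks_orc)
qed

lemma orc_ev_even:
  "j \<le> length is \<Longrightarrow> k > 2 + 2 * j \<Longrightarrow> ev x (orc is) k (2 + 2 * j) = (\<exists>j'<j. x ! (is ! j'))"
proof (induction j arbitrary: k)
  case 0
  then have k: "k = Suc (Suc (Suc (k - 3)))" by simp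
  show ?case by (subst k, simp add: orc_nth orv_def)
next
  case (Suc j)
  then obtain k' where k: "k = Suc k'" and k': "k' > 2 + 2 * j" by (cases k) auto
  then obtain k'' where k'': "k' = Suc k''" by (cases k') auto
  have o1: "orc is ! (2 + 2 * Suc j) = VOr (2 + 2 * j) (3 + 2 * j)"
    using Suc.prems by (simp add: orc_nth orv_def)
  have o2: "orc is ! (3 + 2 * j) = VIn (is ! j)"
    using Suc.prems by (simp add: orc_nth orv_def)
  have "ev x (orc is) k (2 + 2 * Suc j) = (ev x (orc is) k' (2 + 2 * j) \<or> ev x (orc is) k' (3 + 2 * j))"
    unfolding k by (simp only: ev.simps o1 vtx.case)
  also have "ev x (orc is) k' (3 + 2 * j) = x ! (is ! j)" unfolding k'' by (simp add: o2)
  also have "ev x (orc is) k' (2 + 2 * j) = (\<exists>j'<j. x ! (is ! j'))" using Suc k' by simp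
  finally show ?case using less_Suc_eq by auto
qed

lemma orc_eval: "circ_eval (orc is) x = (\<exists>j<length is. x ! (is ! j))"
  unfolding circ_eval_def sinks_orc using orc_ev_even[of "length is" "is" "3 + 2 * length is" x] by simp



definition M0 :: tm where
  "M0 = TM 0 [(0, [Blank, S0], 0, [], [0, 1]), (0, [Blank, S1], 1, [], [0, 0]), (0, [Blank, Blank], 2, [], [0, 0])]"

lemma wf_M0: "wf_tm M0"
  by (simp add: wf_tm_def M0_def)

lemma cfg_Suc: "cfg_at M u x (Suc t) = (case step M u x (cfg_at M u x t) of None \<Rightarrow> cfg_at M u x t | Some c' \<Rightarrow> c')"
  unfolding cfg_at_def by simp

lemma cfg0: "cfg_at M u x 0 = init_cfg M" by (simp add: cfg_at_def)

definition fp :: "bool list \<Rightarrow> nat" where "fp x = length (takeWhile Not x)"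

lemma fp_le: "fp x \<le> length x" by (simp add: fp_def length_takeWhile_le)

lemma fp_before: "t < fp x \<Longrightarrow> t < length x \<and> \<not> x ! t"
  unfolding fp_def by (induction x arbitrary: t) (auto simp: nth_Cons split: nat.splits if_splits)

lemma fp_at: "fp x < length x \<Longrightarrow> x ! fp x"
  unfolding fp_def using nth_length_takeWhile by fastforce

lemma fp_iff: "fp x < length x \<longleftrightarrow> True \<in> set x"
  unfolding fp_def by (induction x) auto

lemma step_run: "t < fp x \<Longrightarrow> step M0 [] x (0, [0, int t], []) = Some (0, [0, int (Suc t)], [])"
  using fp_before[of t x]
  by (simp add: step_def M0_def read_syms_def tape_of_def)

lemma step_end1: "fp x < length x \<Longrightarrow> step M0 [] x (0, [0, int (fp x)], []) = Some (1, [0, int (fp x)], [])"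
  using fp_at[of x]
  by (simp add: step_def M0_def read_syms_def tape_of_def)

lemma step_end2: "fp x = length x \<Longrightarrow> step M0 [] x (0, [0, int (fp x)], []) = Some (2, [0, int (fp x)], [])"
  by (simp add: step_def M0_def read_syms_def tape_of_def)

lemma cfg_run: "t \<le> fp x \<Longrightarrow> cfg_at M0 [] x t = (0, [0, int t], [])"
proof (induction t)
  case 0 then show ?case by (simp add: cfg0 init_cfg_def M0_def numeral_2_eq_2)
next
  case (Suc t)
  then show ?case using step_run[of t x] by (simp add: cfg_Suc)
qed

lemma cfg_end: "cfg_at M0 [] x (Suc (fp x)) = ((if True \<in> set x then 1 else 2), [0, int (fp x)], [])"
  using cfg_run[of "fp x" x] step_end1[of x] step_end2[of x] fp_iff[of x] fp_le[of x]
  by (auto simp: cfg_Suc)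

lemma M0_halts: "halts_at M0 [] x (Suc (fp x))"
proof -
  have "step M0 [] x (cfg_at M0 [] x (Suc (fp x))) = None"
    unfolding cfg_end by (simp add: step_def)
  moreover have "step M0 [] x (cfg_at M0 [] x t') \<noteq> None" if "t' < Suc (fp x)" for t'
  proof (cases "t' < fp x")
    case True then show ?thesis using cfg_run[of t' x] step_run[of t' x] by simp
  next
    case False
    then have "t' = fp x" using that by simp
    then show ?thesis using cfg_run[of "fp x" x] step_end1[of x] step_end2[of x] fp_le[of x] by fastforce
  qed
  ultimately show ?thesis by (simp add: halts_at_def)
qed

lemma M0_out: "tm_out M0 [] x (Suc (fp x)) = Some (True \<in> set x)"
  unfolding tm_out_def cfg_end by (simp add: out_of_def)




definition zs :: "nat \<Rightarrow> bool list" where "zs n = replicate n False"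
definition ee :: "nat \<Rightarrow> nat \<Rightarrow> bool list" where "ee n i = (replicate n False)[i := True]"
definition gg :: "nat \<Rightarrow> nat \<Rightarrow> bool list" where "gg n j = (if j < n then ee n j else zs n)"
definition PP :: "nat \<Rightarrow> bool list pmf" where "PP n = map_pmf (gg n) (pmf_of_set {..<2 * n})"
definition ff :: "bool list \<Rightarrow> bool" where "ff x = (True \<in> set x)"

lemma length_zs[simp]: "length (zs n) = n" by (simp add: zs_def)
lemma length_ee[simp]: "length (ee n i) = n" by (simp add: ee_def)
lemma ff_zs[simp]: "ff (zs n) = False" by (simp add: ff_def zs_def)
lemma ff_ee[simp]: "i < n \<Longrightarrow> ff (ee n i) = True"
  by (simp add: ff_def ee_def set_update_memI)
lemma ee_nth: "i < n \<Longrightarrow> k < n \<Longrightarrow> ee n i ! k = (k = i)" by (auto simp: ee_def nth_list_update)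
lemma zs_nth: "k < n \<Longrightarrow> zs n ! k = False" by (simp add: zs_def)
lemma fp_ee: "i < n \<Longrightarrow> fp (ee n i) = i"
proof -
  assume i: "i < n"
  have "\<And>t. t < i \<Longrightarrow> \<not> ee n i ! t" using i by (simp add: ee_nth)
  then have "i \<le> fp (ee n i)" unfolding fp_def using i
    by (intro length_takeWhile_less_P_nth) auto
  moreover have "fp (ee n i) \<le> i"
  proof (rule ccontr)
    assume "\<not> fp (ee n i) \<le> i"
    then show False using fp_before[of i "ee n i"] i by (simp add: ee_nth)
  qed
  ultimately show ?thesis by simp
qed

lemma ne2: "(n::nat) \<ge> 1 \<Longrightarrow> {..<2 * n} \<noteq> {}" by (metis lessThan_iff less_le_trans mult_2 trans_less_add1 zero_less_one empty_iff)

lemma set_PP: "n \<ge> 1 \<Longrightarrow> set_pmf (PP n) = gg n ` {..<2 * n}"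
  unfolding PP_def by (simp add: set_pmf_of_set[OF ne2 finite_lessThan])

lemma PP_cases: "n \<ge> 1 \<Longrightarrow> x \<in> set_pmf (PP n) \<Longrightarrow> x = zs n \<or> (\<exists>i<n. x = ee n i)"
  by (auto simp: set_PP gg_def)

lemma PP_len: "n \<ge> 1 \<Longrightarrow> set_pmf (PP n) \<subseteq> {x. length x = n}"
  by (auto simp: set_PP gg_def)

lemma acc_PP: "n \<ge> 1 \<Longrightarrow> acc (PP n) ff g = card {j\<in>{..<2*n}. g (gg n j) = ff (gg n j)} / (2 * n)"
  unfolding acc_def PP_def
  by (simp add: measure_pmf_of_set[OF ne2 finite_lessThan] Int_def vimage_def)




definition Lf :: "nat \<Rightarrow> nat \<Rightarrow> nat" where
  "Lf s n = 2 * clog2 n + 2 + s * (3 + max (2 * clog2 s) (clog2 n))"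

lemma Lf_strict: assumes "s' < s" shows "Lf s' n < Lf s n"
proof -
  have "clog2 s' \<le> clog2 s" using assms clog2_mono by simp
  then have "3 + max (2 * clog2 s') (clog2 n) \<le> 3 + max (2 * clog2 s) (clog2 n)" by simp
  then have "s' * (3 + max (2 * clog2 s') (clog2 n)) \<le> s' * (3 + max (2 * clog2 s) (clog2 n))"
    by (rule mult_le_mono2)
  also have "\<dots> < s * (3 + max (2 * clog2 s) (clog2 n))" using assms by simp
  finally show ?thesis unfolding Lf_def by simp
qed

lemma Lf_le_imp: "Lf s n \<le> Lf s' n \<Longrightarrow> s \<le> s'"
  using Lf_strict[of s' s n] by (meson not_le)

lemma circ_eval_cong:
  assumes "decode_circ h = Some (n, vs)"
    and "\<forall>v<length vs. \<forall>i. vs!v = VIn i \<longrightarrow> x!i = y!i"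
  shows "circ_eval vs x = circ_eval vs y"
  unfolding circ_eval_def
  using ev_cong[OF decode_circ_props(2)[OF assms(1)] assms(2) sink_range[OF decode_circ_props(4)[OF assms(1)]]] .

lemma acc_bound:
  assumes n1: "n \<ge> 1" and dec: "decode_circ h = Some (n, vs)"
  shows "acc (PP n) ff (\<lambda>x. the (circuit_interp h x)) \<le> (n + length vs) / (2 * n)"
proof -
  define g where "g = (\<lambda>x. the (circuit_interp h x))"
  have gx: "length x = n \<Longrightarrow> g x = circ_eval vs x" for x
    by (simp add: g_def circuit_interp_def dec)
  define used where "used = {i. \<exists>v<length vs. vs!v = VIn i}"
  have "used \<subseteq> (\<lambda>v. case vs!v of VIn i \<Rightarrow> i | _ \<Rightarrow> 0) ` {..<length vs}"
    unfolding used_def by force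
  then have cu: "card used \<le> length vs"
    by (metis (no_types, lifting) card_image_le card_lessThan card_mono finite_imageI finite_lessThan order_trans)
  have fu: "finite used"
    using \<open>used \<subseteq> _\<close> finite_subset by blast
  define S where "S = {j\<in>{..<2*n}. g (gg n j) = ff (gg n j)}"
  have "card S \<le> n + length vs"
  proof (cases "circ_eval vs (zs n)")
    case True
    have "S \<subseteq> {..<n}"
    proof
      fix j assume "j \<in> S"
      then show "j \<in> {..<n}" using True gx[of "zs n"] by (auto simp: S_def gg_def split: if_splits)
    qed
    then have "card S \<le> n" by (metis card_lessThan card_mono finite_lessThan)
    then show ?thesis by simp
  next
    case False
    have "S \<subseteq> used \<union> {n..<2*n}"
    proof
      fix j assume jS: "j \<in> S"
      show "j \<in> used \<union> {n..<2*n}"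
      proof (cases "j < n")
        case False then show ?thesis using jS by (auto simp: S_def)
      next
        case True
        show ?thesis
        proof (rule ccontr)
          assume nu: "j \<notin> used \<union> {n..<2*n}"
          have "\<forall>v<length vs. \<forall>i. vs!v = VIn i \<longrightarrow> ee n j ! i = zs n ! i"
          proof (intro allI impI)
            fix v i assume v: "v < length vs" "vs ! v = VIn i"
            then have "i < n" using decode_circ_props(3)[OF dec] by blast
            moreover have "i \<noteq> j" using nu v unfolding used_def by blast
            ultimately show "ee n j ! i = zs n ! i" using True by (simp add: ee_nth zs_nth)
          qed
          then have "circ_eval vs (ee n j) = circ_eval vs (zs n)"
            by (rule circ_eval_cong[OF dec])
          then have "g (gg n j) = False" using False gx[of "ee n j"] True by (simp add: gg_def)
          moreover have "ff (gg n j) = True" using True by (simp add: gg_def)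
          ultimately show False using jS by (simp add: S_def)
        qed
      qed
    qed
    then have "card S \<le> card (used \<union> {n..<2*n})" by (intro card_mono) (use fu in auto)
    also have "\<dots> \<le> card used + card {n..<2*n}" by (rule card_Un_le)
    also have "\<dots> \<le> length vs + n" using cu by simp
    finally show ?thesis by simp
  qed
  then have "real (card S) \<le> real n + real (length vs)" by linarith
  moreover have "acc (PP n) ff g = card S / (2 * n)" unfolding S_def using acc_PP[OF n1] by simp
  ultimately show ?thesis unfolding g_def using n1 by (simp add: divide_right_mono)
qed




lemma cands_ne: assumes "consistent \<phi> n D h0" shows "mdl_cands \<phi> n D \<noteq> {}"
proof -
  obtain h where "consistent \<phi> n D h" "\<forall>h'. consistent \<phi> n D h' \<longrightarrow> length h \<le> length h'"
    using ex_has_least_nat[of "consistent \<phi> n D" h0 length] assms by blast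
  then show ?thesis unfolding mdl_cands_def by blast
qed

lemma MDL_some:
  assumes "valid_tb tb" "consistent \<phi> n D h0"
  shows "MDL \<phi> tb n D = Some (\<lambda>x. the (\<phi> (tb D (mdl_cands \<phi> n D)) x))"
    and "consistent \<phi> n D (tb D (mdl_cands \<phi> n D))"
    and "length (tb D (mdl_cands \<phi> n D)) \<le> length h0"
proof -
  have ne: "mdl_cands \<phi> n D \<noteq> {}" by (rule cands_ne[OF assms(2)])
  then show "MDL \<phi> tb n D = Some (\<lambda>x. the (\<phi> (tb D (mdl_cands \<phi> n D)) x))" by (simp add: MDL_def)
  have "tb D (mdl_cands \<phi> n D) \<in> mdl_cands \<phi> n D" using assms(1) ne by (simp add: valid_tb_def)
  then show "consistent \<phi> n D (tb D (mdl_cands \<phi> n D))" "length (tb D (mdl_cands \<phi> n D)) \<le> length h0"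
    using assms(2) by (auto simp: mdl_cands_def)
qed

lemma set_mk_dataset: "set (mk_dataset f m xs) = (\<lambda>j. (xs j, f (xs j))) ` {..<m}"
  by (auto simp: mk_dataset_def)

definition idx :: "bool list \<Rightarrow> nat" where "idx x = (if True \<in> set x then fp x else 0)"

lemma circ_fail:
  assumes n1: "n \<ge> 1" and xs: "\<forall>j<m. xs j \<in> set_pmf (PP n)" and tb: "valid_tb tb"
    and small: "real n + (2 * m + 3) < 2 * n * (1 - \<epsilon>)"
  shows "\<not> mdl_success circuit_interp tb n ff (PP n) \<epsilon> (mk_dataset ff m xs)"
proof -
  define D where "D = mk_dataset ff m xs"
  define "is" where "is = map (\<lambda>j. idx (xs j)) [0..<m]"
  define hor where "hor = enc_circ n (orc is)"
  have lis: "length is = m" by (simp add: is_def)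
  have cs: "\<And>j. j < m \<Longrightarrow> xs j = zs n \<or> (\<exists>i<n. xs j = ee n i)" using PP_cases[OF n1] xs by blast
  have isj: "\<And>j. j < m \<Longrightarrow> is ! j < n \<and> (xs j \<noteq> zs n \<longrightarrow> xs j ! (is ! j))"
  proof -
    fix j assume j: "j < m"
    show "is ! j < n \<and> (xs j \<noteq> zs n \<longrightarrow> xs j ! (is ! j))"
    proof (cases "xs j = zs n")
      case True
      then have "idx (xs j) = 0" by (simp add: idx_def zs_def)
      then show ?thesis using True j n1 by (simp add: is_def)
    next
      case False
      then obtain i where i: "i < n" "xs j = ee n i" using cs j by blast
      then have "idx (xs j) = i" using ff_ee[of i n] by (simp add: idx_def fp_ee ff_def)
      then show ?thesis using i j by (simp add: is_def ee_nth)
    qed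
  qed
  have is_lt: "\<forall>i\<in>set is. i < n" using isj lis by (metis in_set_conv_nth)
  have dec_or: "decode_circ hor = Some (n, orc is)"
    unfolding hor_def
  proof (rule decode_enc_circ[OF n1 wf_orc])
    show "\<forall>v<length (orc is). \<forall>a\<in>parents (orc is ! v). a < length (orc is)"
      using orc_par by fastforce
    show "\<forall>v<length (orc is). \<forall>i. orc is ! v = VIn i \<longrightarrow> i < n"
      using orv_in orc_nth is_lt n1 by fastforce
  qed
  have ci_or: "\<And>x. length x = n \<Longrightarrow> circuit_interp hor x = Some (\<exists>j<m. x ! (is ! j))"
    by (simp add: circuit_interp_def dec_or orc_eval lis)
  have cons_or: "consistent circuit_interp n D hor"
    unfolding consistent_def
  proof (intro conjI ballI allI impI)
    fix p assume "p \<in> set D"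
    then obtain j where j: "j < m" "p = (xs j, ff (xs j))" by (auto simp: D_def set_mk_dataset)
    have lx: "length (xs j) = n" using PP_len[OF n1] xs j by blast
    have "(\<exists>j'<m. xs j ! (is ! j')) = ff (xs j)"
    proof (cases "xs j = zs n")
      case True
      then show ?thesis using isj by (auto simp: zs_nth)
    next
      case False
      then obtain i where "i < n" "xs j = ee n i" using cs j by blast
      then show ?thesis using isj[OF j(1)] False j(1) by auto
    qed
    then show "case p of (x, y) \<Rightarrow> circuit_interp hor x = Some y" using j ci_or lx by simp
  next
    fix x :: "bool list" assume "length x = n"
    then show "circuit_interp hor x \<noteq> None" using ci_or by simp
  qed
  define h where "h = tb D (mdl_cands circuit_interp n D)"
  note ms = MDL_some[OF tb cons_or, folded h_def]
  have hcons: "\<forall>x. length x = n \<longrightarrow> circuit_interp h x \<noteq> None" using ms(2) by (simp add: consistent_def)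
  obtain n' vs where dech: "decode_circ h = Some (n', vs)"
    using hcons[rule_format, of "zs n"] by (cases "decode_circ h") (auto simp: circuit_interp_def)
  have "n' = n" using hcons[rule_format, of "zs n"] dech
    by (auto simp: circuit_interp_def split: if_splits)
  then have dech': "decode_circ h = Some (n, vs)" using dech by simp
  have "Lf (length vs) n \<le> Lf (3 + 2 * m) n"
    using ms(3) decode_circ_props(1)[OF dech'] decode_circ_props(1)[OF dec_or] lis
    by (simp add: Lf_def)
  then have lvs: "length vs \<le> 3 + 2 * m" by (rule Lf_le_imp)
  have "acc (PP n) ff (\<lambda>x. the (circuit_interp h x)) \<le> (real n + real (length vs)) / (2 * real n)"
    using acc_bound[OF n1 dech'] by simp
  also have "\<dots> \<le> (real n + (2 * m + 3)) / (2 * real n)" using lvs n1 by (simp add: divide_right_mono)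
  also have "\<dots> < 1 - \<epsilon>" using small n1 by (simp add: divide_less_eq mult.commute)
  finally show ?thesis using ms(1) by (simp add: mdl_success_def D_def)
qed




lemma samples_set: "xs \<in> set_pmf (samples P m) \<Longrightarrow> j < m \<Longrightarrow> xs j \<in> set_pmf P"
  unfolding samples_def by (simp add: set_Pi_pmf PiE_dflt_def)

lemma circ_cx:
  assumes n1: "n \<ge> 1" and tb: "valid_tb tb" and d1: "\<delta> < 1"
    and pac: "mdl_pac circuit_interp tb n ff (PP n) \<epsilon> \<delta> m"
  shows "real n + (2 * m + 3) \<ge> 2 * n * (1 - \<epsilon>)"
proof (rule ccontr)
  assume small: "\<not> ?thesis"
  let ?S = "{xs. mdl_success circuit_interp tb n ff (PP n) \<epsilon> (mk_dataset ff m xs)}"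
  have "set_pmf (samples (PP n) m) \<inter> ?S = {}"
  proof (rule ccontr)
    assume "set_pmf (samples (PP n) m) \<inter> ?S \<noteq> {}"
    then obtain xs where "xs \<in> set_pmf (samples (PP n) m)" "xs \<in> ?S" by blast
    then show False using circ_fail[OF n1 _ tb, of m xs \<epsilon>] samples_set small by auto
  qed
  then have "measure_pmf.prob (samples (PP n) m) ?S = 0" by (simp add: measure_pmf_zero_iff)
  moreover have "measure_pmf.prob (samples (PP n) m) ?S \<ge> 1 - \<delta>" using pac by (simp add: mdl_pac_def)
  ultimately show False using d1 by simp
qed

lemma finite_short: "finite {h::bool list. length h \<le> L}"
proof -
  have "{h::bool list. length h \<le> L} = {xs. set xs \<subseteq> UNIV \<and> length xs \<le> L}" by simp
  then show ?thesis using finite_lists_length_le[of "UNIV :: bool set" L] by simp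
qed

lemma occam:
  fixes \<epsilon> :: real
  assumes hp: "\<forall>x. length x = n \<longrightarrow> \<phi> hp x = Some (f x)"
    and supp: "set_pmf P \<subseteq> {x. length x = n}" and tb: "valid_tb tb"
    and e0: "\<epsilon> < 1"
  shows "measure_pmf.prob (samples P m) {xs. \<not> mdl_success \<phi> tb n f P \<epsilon> (mk_dataset f m xs)}
           \<le> card {h::bool list. length h \<le> length hp} * (1 - \<epsilon>) ^ m"
proof -
  define F where "F = {xs. \<not> mdl_success \<phi> tb n f P \<epsilon> (mk_dataset f m xs)}"
  define B where "B = {h. length h \<le> length hp \<and> acc P f (\<lambda>x. the (\<phi> h x)) < 1 - \<epsilon>}"
  define A where "A = (\<lambda>h. {x. the (\<phi> h x) = f x})"
  have finB: "finite B" using finite_subset[OF _ finite_short[of "length hp"]] by (auto simp: B_def)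
  have sub: "F \<inter> set_pmf (samples P m) \<subseteq> (\<Union>h\<in>B. Pi {..<m} (\<lambda>_. A h))"
  proof
    fix xs assume xsF: "xs \<in> F \<inter> set_pmf (samples P m)"
    define D where "D = mk_dataset f m xs"
    have xj: "\<And>j. j < m \<Longrightarrow> length (xs j) = n" using xsF samples_set supp by blast
    have c0: "consistent \<phi> n D hp"
      unfolding consistent_def D_def set_mk_dataset using hp xj by auto
    define h where "h = tb D (mdl_cands \<phi> n D)"
    note ms = MDL_some[OF tb c0, folded h_def]
    have "\<not> acc P f (\<lambda>x. the (\<phi> h x)) \<ge> 1 - \<epsilon>"
      using xsF ms(1) by (simp add: F_def mdl_success_def D_def)
    then have hB: "h \<in> B" using ms(3) by (simp add: B_def)
    have "\<forall>j<m. xs j \<in> A h"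
    proof (intro allI impI)
      fix j assume "j < m"
      then have "(xs j, f (xs j)) \<in> set D" by (auto simp: D_def set_mk_dataset)
      then have "\<phi> h (xs j) = Some (f (xs j))" using ms(2) by (auto simp: consistent_def)
      then show "xs j \<in> A h" by (simp add: A_def)
    qed
    then show "xs \<in> (\<Union>h\<in>B. Pi {..<m} (\<lambda>_. A h))" using hB by blast
  qed
  have "measure_pmf.prob (samples P m) F = measure_pmf.prob (samples P m) (F \<inter> set_pmf (samples P m))"
    by (simp add: measure_Int_set_pmf)
  also have "\<dots> \<le> measure_pmf.prob (samples P m) (\<Union>h\<in>B. Pi {..<m} (\<lambda>_. A h))"
    by (rule measure_pmf.finite_measure_mono[OF sub]) simp
  also have "\<dots> \<le> (\<Sum>h\<in>B. measure_pmf.prob (samples P m) (Pi {..<m} (\<lambda>_. A h)))"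
    by (rule measure_pmf.finite_measure_subadditive_finite[OF finB]) simp
  also have "\<dots> \<le> (\<Sum>h\<in>B. (1 - \<epsilon>) ^ m)"
  proof (rule sum_mono)
    fix h assume "h \<in> B"
    then have a: "measure_pmf.prob P (A h) < 1 - \<epsilon>" by (simp add: B_def acc_def A_def)
    have "measure_pmf.prob (samples P m) (Pi {..<m} (\<lambda>_. A h)) = measure_pmf.prob P (A h) ^ m"
      unfolding samples_def by (simp add: measure_Pi_pmf_Pi)
    also have "\<dots> \<le> (1 - \<epsilon>) ^ m" using a by (intro power_mono) auto
    finally show "measure_pmf.prob (samples P m) (Pi {..<m} (\<lambda>_. A h)) \<le> (1 - \<epsilon>) ^ m" .
  qed
  also have "\<dots> = card B * (1 - \<epsilon>) ^ m" by simp
  also have "\<dots> \<le> card {h::bool list. length h \<le> length hp} * (1 - \<epsilon>) ^ m"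
    using e0 by (intro mult_right_mono) (auto simp: B_def intro!: card_mono finite_short)
  finally show ?thesis unfolding F_def .
qed



lemma lim0: "((\<lambda>n::nat. (real n + 2) * log 2 (real n + 3) / real n ^ 2) \<longlongrightarrow> 0) sequentially"
  by real_asymp

lemma ev_time:
  fixes a :: real and c :: nat
  assumes a: "a > 0" and c: "c > 1"
  shows "\<forall>\<^sub>F n in sequentially. a * (real n + 2) * log 2 (real n + 3) \<le> real n ^ c"
proof -
  have "\<forall>\<^sub>F n in sequentially. (real n + 2) * log 2 (real n + 3) / real n ^ 2 < 1 / a"
    using order_tendstoD(2)[OF lim0] a by simp
  moreover have "\<forall>\<^sub>F n in sequentially. n \<ge> (1::nat)" by (rule eventually_ge_at_top)
  ultimately show ?thesis
  proof eventually_elim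
    case (elim n)
    then have n: "real n \<ge> 1" by simp
    have "(real n + 2) * log 2 (real n + 3) < real n ^ 2 / a"
      using elim(1) n a by (simp add: divide_less_eq field_simps)
    then have "a * ((real n + 2) * log 2 (real n + 3)) < real n ^ 2" using a by (simp add: field_simps)
    also have "real n ^ 2 \<le> real n ^ c" using n c by (intro power_increasing) auto
    finally show ?case by (simp add: mult.assoc)
  qed
qed

lemma U_prog:
  assumes U: "is_Uc c E U" and c: "c > 1"
  shows "\<exists>N. \<forall>n\<ge>N. \<forall>x. length x = n \<longrightarrow> U (E M0 @ []) x = Some (ff x)"
proof -
  obtain a :: real where a: "a > 0" and H: "\<forall>u. \<exists>N. \<forall>x.
        (length x < N \<longrightarrow> U (E M0 @ u) x = None) \<and>
        (length x \<ge> N \<longrightarrow>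
           (U (E M0 @ u) x = Some False \<or>
            (\<exists>t \<le> length x ^ c. halts_at M0 u x t \<and> U (E M0 @ u) x = tm_out M0 u x t)) \<and>
           (\<forall>t. halts_at M0 u x t \<and> a * (real t + 1) * log 2 (real t + 2) \<le> real (length x ^ c)
                \<longrightarrow> U (E M0 @ u) x = tm_out M0 u x t))"
    using U wf_M0 unfolding is_Uc_def by blast
  obtain N1 where N1: "\<And>x t. length x \<ge> N1 \<Longrightarrow> halts_at M0 [] x t \<Longrightarrow>
      a * (real t + 1) * log 2 (real t + 2) \<le> real (length x ^ c) \<Longrightarrow> U (E M0 @ []) x = tm_out M0 [] x t"
    using spec[OF H, of "[]"] by blast
  obtain N2 where N2: "\<And>n. n \<ge> N2 \<Longrightarrow> a * (real n + 2) * log 2 (real n + 3) \<le> real n ^ c"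
    using ev_time[OF a c] unfolding eventually_sequentially by blast
  have "\<forall>n\<ge>max N1 N2. \<forall>x. length x = n \<longrightarrow> U (E M0 @ []) x = Some (ff x)"
  proof (intro allI impI)
    fix n and x :: "bool list" assume n: "max N1 N2 \<le> n" and lx: "length x = n"
    define t where "t = Suc (fp x)"
    have tn: "t \<le> n + 1" using fp_le[of x] lx by (simp add: t_def)
    have "a * (real t + 1) * log 2 (real t + 2) \<le> a * (real n + 2) * log 2 (real n + 3)"
    proof -
      have "real t + 1 \<le> real n + 2" using tn by simp
      moreover have "log 2 (real t + 2) \<le> log 2 (real n + 3)" using tn by simp
      moreover have "log 2 (real t + 2) \<ge> 0" by simp
      ultimately show ?thesis using a by (intro mult_mono) auto
    qed
    also have "\<dots> \<le> real n ^ c" using N2 n by simp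
    finally have "a * (real t + 1) * log 2 (real t + 2) \<le> real (length x ^ c)" using lx by simp
    then have "U (E M0 @ []) x = tm_out M0 [] x t" using N1 n lx M0_halts[of x] by (simp add: t_def)
    then show "U (E M0 @ []) x = Some (ff x)" by (simp add: t_def M0_out ff_def)
  qed
  then show ?thesis by blast
qed


lemma U_pac:
  fixes \<epsilon> \<delta> :: real
  assumes hp: "\<forall>x. length x = n \<longrightarrow> \<phi> hp x = Some (f x)"
    and supp: "set_pmf P \<subseteq> {x. length x = n}" and tb: "valid_tb tb" and e0: "0 < \<epsilon>" "\<epsilon> < 1"
    and m0: "card {h::bool list. length h \<le> length hp} * (1 - \<epsilon>) ^ m0 \<le> \<delta>"
  shows "mdl_pac \<phi> tb n f P \<epsilon> \<delta> m0"
  unfolding mdl_pac_def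
proof (intro allI impI)
  fix m' assume mm: "m0 \<le> m'"
  let ?S = "{xs. mdl_success \<phi> tb n f P \<epsilon> (mk_dataset f m' xs)}"
  have "measure_pmf.prob (samples P m') (UNIV - ?S) \<le> card {h::bool list. length h \<le> length hp} * (1 - \<epsilon>) ^ m'"
  proof -
    note oc = occam[where \<phi>=\<phi> and hp=hp and f=f and n=n, OF hp supp tb e0(2), of m']
    have "UNIV - ?S = {xs. \<not> mdl_success \<phi> tb n f P \<epsilon> (mk_dataset f m' xs)}" by auto
    then show ?thesis using oc by simp
  qed
  also have "\<dots> \<le> card {h::bool list. length h \<le> length hp} * (1 - \<epsilon>) ^ m0"
    using e0 mm by (intro mult_left_mono power_decreasing) auto
  also have "\<dots> \<le> \<delta>" by (rule m0)
  finally have "measure_pmf.prob (samples P m') (UNIV - ?S) \<le> \<delta>" .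
  moreover have "measure_pmf.prob (samples P m') (UNIV - ?S) = 1 - measure_pmf.prob (samples P m') ?S"
    using measure_pmf.prob_compl[of ?S "samples P m'"] by simp
  ultimately show "measure_pmf.prob (samples P m') ?S \<ge> 1 - \<delta>" by simp
qed

theorem theorem4:
  fixes \<epsilon> \<delta> \<gamma> :: real and c d :: nat
    and E :: "tm \<Rightarrow> bool list" and U :: interp and tbU tbC :: tiebreak
  assumes "0 < \<epsilon>" "\<epsilon> < 1/2" "0 < \<delta>" "\<delta> < 1"
    and "c > 1" "d \<ge> 1" "\<gamma> > 0"
    and "tm_encoding E" "is_Uc c E U"
    and "valid_tb tbU" "valid_tb tbC"
  shows "\<exists>K > 0. \<forall>\<^sub>F n in sequentially.
           ereal (K * real n powr (1 - \<gamma>)) \<le> gain U tbU circuit_interp tbC \<epsilon> \<delta> n d"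
proof -
  note e0 = assms(1) and e1 = assms(2) and d0 = assms(3) and d1 = assms(4)
  obtain N0 where N0: "\<And>n x. n \<ge> N0 \<Longrightarrow> length x = n \<Longrightarrow> U (E M0 @ []) x = Some (ff x)"
    using U_prog[OF assms(9) assms(5)] by blast
  define h0 where "h0 = E M0 @ []"
  define C where "C = real (card {h::bool list. length h \<le> length h0})"
  have "(\<lambda>m. C * (1 - \<epsilon>) ^ m) \<longlonglongrightarrow> C * 0"
    using e0 e1 by (intro tendsto_mult tendsto_const LIMSEQ_power_zero) auto
  then have "\<forall>\<^sub>F m in sequentially. C * (1 - \<epsilon>) ^ m < \<delta>"
    using d0 by (intro order_tendstoD(2)) auto
  then obtain M1 where M1: "\<And>m. m \<ge> M1 \<Longrightarrow> C * (1 - \<epsilon>) ^ m < \<delta>"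
    unfolding eventually_sequentially by blast
  define m0 where "m0 = max M1 1"
  have m01: "m0 \<ge> 1" by (simp add: m0_def)
  have m0C: "C * (1 - \<epsilon>) ^ m0 \<le> \<delta>" using M1[of m0] by (simp add: m0_def)
  define K where "K = (1 - 2 * \<epsilon>) / (4 * m0)"
  have K0: "K > 0" using e1 m01 by (simp add: K_def)
  have ev: "\<forall>\<^sub>F n in sequentially. n \<ge> max (max N0 1) (length h0) \<and> real n \<ge> 6 / (1 - 2 * \<epsilon>)"
    by (intro eventually_conj eventually_ge_at_top) (simp add: eventually_sequentially, meson nat_ceiling_le_eq order_refl)
  have "\<forall>\<^sub>F n in sequentially. ereal (K * real n powr (1 - \<gamma>)) \<le> gain U tbU circuit_interp tbC \<epsilon> \<delta> n d"
    using ev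
  proof eventually_elim
    case (elim n)
    then have n1: "n \<ge> 1" and nN: "n \<ge> N0" and nh: "n \<ge> length h0" and n6: "real n \<ge> 6 / (1 - 2 * \<epsilon>)"
      by auto
    have hU: "\<forall>x. length x = n \<longrightarrow> U h0 x = Some (ff x)" using N0 nN by (simp add: h0_def)
    have supp: "set_pmf (PP n) \<subseteq> {x. length x = n}" by (rule PP_len[OF n1])
    have pacU: "mdl_pac U tbU n ff (PP n) \<epsilon> \<delta> m0"
      by (rule U_pac[where \<phi>=U and hp=h0 and f=ff and n=n, OF hU supp assms(10) e0]) (use e1 m0C C_def in auto)
    define u where "u = (LEAST m. m \<ge> 1 \<and> mdl_pac U tbU n ff (PP n) \<epsilon> \<delta> m)"
    have scU: "sample_cx U tbU n ff (PP n) \<epsilon> \<delta> = enat u"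
      using pacU m01 by (auto simp: sample_cx_def u_def)
    have u1: "u \<ge> 1" "u \<le> m0"
    proof -
      have "u \<ge> 1 \<and> mdl_pac U tbU n ff (PP n) \<epsilon> \<delta> u"
        unfolding u_def by (rule LeastI[of _ m0]) (use pacU m01 in auto)
      then show "u \<ge> 1" by simp
      show "u \<le> m0" unfolding u_def by (rule Least_le) (use pacU m01 in auto)
    qed
    have bound: "ereal (K * real n powr (1 - \<gamma>))
       \<le> ereal_of_enat (sample_cx circuit_interp tbC n ff (PP n) \<epsilon> \<delta>) / ereal_of_enat (sample_cx U tbU n ff (PP n) \<epsilon> \<delta>)"
    proof (cases "\<exists>m\<ge>1. mdl_pac circuit_interp tbC n ff (PP n) \<epsilon> \<delta> m")
      case False
      then have "sample_cx circuit_interp tbC n ff (PP n) \<epsilon> \<delta> = \<infinity>" by (simp add: sample_cx_def)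
      then show ?thesis using scU u1 by simp
    next
      case True
      define cc where "cc = (LEAST m. m \<ge> 1 \<and> mdl_pac circuit_interp tbC n ff (PP n) \<epsilon> \<delta> m)"
      have scC: "sample_cx circuit_interp tbC n ff (PP n) \<epsilon> \<delta> = enat cc"
        using True by (simp add: sample_cx_def cc_def)
      have "cc \<ge> 1 \<and> mdl_pac circuit_interp tbC n ff (PP n) \<epsilon> \<delta> cc"
        unfolding cc_def using True by (metis (mono_tags, lifting) LeastI)
      then have ccb: "2 * real n * (1 - \<epsilon>) \<le> real n + (2 * real cc + 3)"
        using circ_cx[OF n1 assms(11) d1, of \<epsilon> cc] by blast
      have pw: "real n powr (1 - \<gamma>) \<le> real n"
        using n1 assms(7) powr_mono[of "1 - \<gamma>" 1 "real n"] by simp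
      have "K * real n powr (1 - \<gamma>) \<le> K * real n" using K0 pw by simp
      also have "\<dots> = (1 - 2 * \<epsilon>) * real n / (4 * m0)" by (simp add: K_def)
      also have "\<dots> \<le> ((1 - 2 * \<epsilon>) * real n - 3) / (2 * m0)"
      proof -
        define y where "y = (1 - 2 * \<epsilon>) * real n"
        have y6: "y \<ge> 6" using n6 e1 by (simp add: divide_le_eq mult.commute y_def)
        have m0p: "real m0 > 0" using m01 by simp
        have "y / (4 * m0) \<le> (2 * (y - 3)) / (4 * m0)"
          by (rule divide_right_mono) (use y6 m0p in auto)
        also have "\<dots> = (y - 3) / (2 * m0)" using m0p by (simp add: field_simps)
        finally show ?thesis by (simp add: y_def)
      qed
      also have "\<dots> \<le> real cc / m0"
      proof -
        have yc: "(1 - 2 * \<epsilon>) * real n - 3 \<le> 2 * real cc" using ccb by (simp add: algebra_simps)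
        have m0p: "real m0 > 0" using m01 by simp
        have "((1 - 2 * \<epsilon>) * real n - 3) / (2 * m0) \<le> (2 * real cc) / (2 * m0)"
          by (rule divide_right_mono) (use yc m0p in auto)
        also have "\<dots> = real cc / m0" using m0p by simp
        finally show ?thesis .
      qed
      also have "\<dots> \<le> real cc / real u" using u1 by (intro divide_left_mono) auto
      finally have "K * real n powr (1 - \<gamma>) \<le> real cc / real u" .
      then show ?thesis using scC scU u1 by simp
    qed
    have mem: "(ff, PP n) \<in> {(f, P). set_pmf P \<subseteq> {x. length x = n} \<and> desc_len U n f \<le> enat (n ^ d)}"
    proof -
      have "desc_len U n ff \<le> enat (length h0)"
        unfolding desc_len_def using hU by (intro INF_lower2[of h0]) auto
      also have "length h0 \<le> n ^ d"
      proof -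
        have "n ^ 1 \<le> n ^ d" by (rule power_increasing) (use n1 assms(6) in auto)
        then show ?thesis using nh by simp
      qed
      then have "enat (length h0) \<le> enat (n ^ d)" by simp
      finally show ?thesis using supp by simp
    qed
    show ?case unfolding gain_def
      by (rule order_trans[OF bound]) (rule SUP_upper2[OF mem], simp)
  qed
  then show ?thesis using K0 by blast
qed

end
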